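(* Let $n\geqslant 1$ and $0\leqslant d\leqslant n-1$ be integers. Then the following two identities of rational functions in $q$ hold: \begin{align*} &\sum_{k=0}^{n-1}q^k\begin{bmatrix}2k\\ k+d\end{bmatrix}(-q^{k+1};q)_{n-1-k}\\ &\quad=\sum_{\substack{k=0\\ k\equiv n-d \pmod 2}}^{n-d}(-1)^{(n-d-k)/2}q^{3(n^2+k^2-d^2)/4-3nk/2+n-k}\frac{(1-q^k)(1+q^{n-k+1})}{(1-q^{2n-k+1})(1+q^n)}\begin{bmatrix}2n\\ k\end{bmatrix}, \end{align*} and \begin{align*} &\sum_{k=0}^{n-1}q^k\begin{bmatrix}2k\\ k+d\end{bmatrix}(-q^{k+1};q)_{n-1-k}^2 =\sum_{k=d+1}^{n}\sum_{j=k+1}^{n+1}q^{(j^2-3j+k^2-k)/2-d^2+1}\,\frac{1+q^{j-1}}{1+q^n}\begin{bmatrix}2n\\ n-j+1\end{bmatrix}. \end{align*}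
   Context: Here $q$ is an indeterminate. For $n\geq 1$, $(x;q)_n=(1-x)(1-xq)\cdots(1-xq^{n-1})$ and $(x;q)_0=1$. The $q$-binomial coefficient is $\begin{bmatrix}n\\ k\end{bmatrix}=\frac{(q;q)_n}{(q;q)_k(q;q)_{n-k}}$ if $0\leqslant k\leqslant n$ and $0$ otherwise. *)

theory Defs
  imports "HOL-Computational_Algebra.Polynomial" "HOL-Computational_Algebra.Fraction_Field"
begin

definition qpoch :: "'a::field \<Rightarrow> 'a \<Rightarrow> nat \<Rightarrow> 'a" where
  "qpoch x q n = (\<Prod>i<n. 1 - x * q ^ i)"

definition qbinom :: "'a::field \<Rightarrow> nat \<Rightarrow> int \<Rightarrow> 'a" where
  "qbinom q n k = (if 0 \<le> k \<and> k \<le> int n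
      then qpoch q q n / (qpoch q q (nat k) * qpoch q q (n - nat k)) else 0)"

definition qvar :: "rat poly fract" where
  "qvar = Fract [:0, 1:] 1"

end

theory Submission
  imports Defs
begin


lemma qf_Suc: "qpoch q q (Suc k) = qpoch q q k * (1 - q ^ Suc k)"
  by (simp add: qpoch_def)

lemma qbinom_nat:
  "k \<le> N \<Longrightarrow> qbinom q N (int k) = qpoch q q N / (qpoch q q k * qpoch q q (N - k))"
  by (simp add: qbinom_def)

lemma qbinom_out: "k < 0 \<or> k > int N \<Longrightarrow> qbinom q N k = 0"
  by (auto simp: qbinom_def)

lemma qbinom_sym: "qbinom q N k = qbinom q N (int N - k)"
  by (auto simp: qbinom_def nat_diff_distrib mult.commute)

lemma alg_P0:
  fixes A B C u v :: "'a::field"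
  assumes "A \<noteq> 0" "B \<noteq> 0" "u \<noteq> 0" "v \<noteq> 0"
  shows "C * (1 - (1-u)*(1-v)) / (A * u * (B * v)) = (1-u) * (C / (A * u * B)) + C / (A * (B * v))
    \<and> C * (1 - (1-u)*(1-v)) / (A * u * (B * v)) = C / (A * u * B) + (1-v) * (C / (A * (B * v)))"
  using assms by (simp add: field_simps)

lemma alg_P:
  fixes A B C x y :: "'a::field"
  assumes "A \<noteq> 0" "B \<noteq> 0" "1 - x \<noteq> 0" "1 - y \<noteq> 0"
  shows "C * (1 - x*y) / (A * (1 - x) * (B * (1 - y))) = x * (C / (A * (1 - x) * B)) + C / (A * (B * (1 - y)))
    \<and> C * (1 - x*y) / (A * (1 - x) * (B * (1 - y))) = C / (A * (1 - x) * B) + y * (C / (A * (B * (1 - y))))"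
proof -
  have e: "1 - (1-x) = x" "1-(1-y) = y" by simp_all
  show ?thesis using alg_P0[OF assms, of C] unfolding e .
qed

lemma lin3:
  fixes X Y Z B0 Bp Bm pa pc pe pN :: "'a::field"
  assumes "X = pa*Y + Z" "Y = pa*Bp + B0" "Z = B0 + pe*Bm" "(1-pa)*Bp = (1-pc)*B0" "pN = pa*pc"
  shows "X = (1+pN)*B0 + pe*Bm + pa*Bp"
proof -
  have "X - ((1+pN)*B0 + pe*Bm + pa*Bp) = pa*((1-pc)*B0 - (1-pa)*Bp)"
    using assms(1,2,3,5) by (simp add: algebra_simps)
  then show ?thesis using assms(4) by simp
qed

lemma lin1:
  fixes q X u B0 B1 B2 P :: "'a::field"
  assumes "P = (1 + q^3*X^2*u^2)*B1 + q^3*X^2*u*B2 + q*u*B0"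
    "(1 - q*u)*B0 = (1 - q^2*X^2*u)*B1" "(1 - u)*B1 = (1 - q^3*X^2*u)*B2"
  shows "X*(1+q*X)*P - (1+q^2*X*u)*(X*(1+q*X))*B1 = q^4*X^4*u*(1+q^2*X*u)*B2 + q*X*u*(1+q^2*X*u)*B0"
proof -
  have "X*(1+q*X)*P - (1+q^2*X*u)*(X*(1+q*X))*B1 - (q^4*X^4*u*(1+q^2*X*u)*B2 + q*X*u*(1+q^2*X*u)*B0)
     = q^2*X^2*u*((1 - q*u)*B0 - (1 - q^2*X^2*u)*B1) - q^3*X^3*u*((1 - u)*B1 - (1 - q^3*X^2*u)*B2)"
    unfolding assms(1) by algebra
  then show ?thesis using assms(2,3) by simp
qed

fun bb :: "nat \<Rightarrow> nat" where "bb 0 = 0" | "bb (Suc p) = bb p + p"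

lemma bb2: "2 * bb p = p * (p - 1)"
proof (induction p)
  case (Suc p)
  then show ?case by (cases p) (simp_all add: algebra_simps)
qed simp

lemma bb_sq: "bb p + bb (Suc p) = p^2"
proof -
  have "2 * (bb p + bb (Suc p)) = 2 * p^2" using bb2[of p] by (cases p) (auto simp: power2_eq_square algebra_simps)
  then show ?thesis by simp
qed

lemma lin_h:
  fixes q A P X B0 Bm Bp T :: "'a::field"
  assumes "T = (1 + q*X^2*P^2)*B0 + X*Bm + q^2*X*P^2*Bp"
  shows "A*P*(1+q*P)*T - (1+X*P)*(1+q*X*P)*(A*P*(1+q*P)*B0)
     = X*P*(A*(1+q*P)*Bm - A*P*(q+q*P)*B0) - X*P*(A*P*(1+q^2*P)*B0 - A*P^2*q*(q+q^2*P)*Bp)"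
  unfolding assms by algebra

lemma lin_w:
  fixes q Z P X B0 B1 :: "'a::field"
  assumes "(1 - q*P^2*X)*B1 = (1 - X)*B0"
  shows "Z*(1+q*P)*B0 - Z*P*(q+q*P)*B1 = Z*(1+q*P*X)*B0 - Z*P^2*q*(1+q*P*X)*B1"
proof -
  have "Z*(1+q*P)*B0 - Z*P*(q+q*P)*B1 - (Z*(1+q*P*X)*B0 - Z*P^2*q*(1+q*P*X)*B1)
     = Z*P*q*((1-X)*B0 - (1 - q*P^2*X)*B1)" by algebra
  then show ?thesis using assms by simp
qed

context
  fixes q :: "'a::field"
  assumes qn: "\<And>k. 0 < k \<Longrightarrow> q ^ k \<noteq> 1"
begin

lemma qf_nz: "qpoch q q k \<noteq> 0"
proof -
  have "\<forall>i<k. 1 - q * q ^ i \<noteq> 0" using qn[of "Suc _"] by auto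
  then show ?thesis by (simp add: qpoch_def)
qed

lemma qbinom_0 [simp]: "qbinom q N 0 = 1"
  using qf_nz[of N] by (simp add: qbinom_def qpoch_def)

lemma qbinom_N [simp]: "qbinom q N (int N) = 1"
  using qf_nz[of N] by (simp add: qbinom_def qpoch_def)

lemma qbinom_SucN [simp]: "qbinom q (Suc N) (int N + 1) = 1"
  using qbinom_N[of "Suc N"] by (simp add: add.commute)

lemma qbinom_M:
  "(1 - q ^ nat (k+1)) * qbinom q N (k+1) = (1 - q ^ nat (int N - k)) * qbinom q N k"
proof -
  consider "k < -1" | "k = -1" | "k \<ge> int N" | "0 \<le> k \<and> k < int N" by linarith
  then show ?thesis
  proof cases
    case 4
    define a where "a = nat k"
    define b where "b = N - nat k - 1"
    have ab: "k = int a" "N = a + b + 1" using 4 unfolding a_def b_def by auto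
    have e1: "k + 1 = int (Suc a)" using ab by simp
    have e2: "nat (int N - k) = Suc b" using ab by simp
    have b1: "qbinom q N (int (Suc a)) = qpoch q q N / (qpoch q q (Suc a) * qpoch q q b)"
      using ab by (subst qbinom_nat) auto
    have b2: "qbinom q N (int a) = qpoch q q N / (qpoch q q a * qpoch q q (Suc b))"
      using ab by (subst qbinom_nat) (auto simp: Suc_diff_le)
    have n1: "1 - q ^ Suc a \<noteq> 0" "1 - q ^ Suc b \<noteq> 0" using qn[of "Suc a"] qn[of "Suc b"] by auto
    show ?thesis
      unfolding e1 e2 unfolding ab(1) b1 b2 qf_Suc nat_int using qf_nz[of a] qf_nz[of b] n1
      by (simp add: field_simps del: power_Suc)
  qed (auto simp: qbinom_out)
qed

lemma qbinom_P:
  "qbinom q (Suc N) k = q ^ nat k * qbinom q N k + qbinom q N (k-1) \<and>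
   qbinom q (Suc N) k = qbinom q N k + q ^ nat (int N + 1 - k) * qbinom q N (k-1)"
proof -
  consider "k < 0" | "k = 0" | "k = int N + 1" | "k > int N + 1" | "1 \<le> k \<and> k \<le> int N" by linarith
  then show ?thesis
  proof cases
    case 5
    define a where "a = nat k - 1"
    define b where "b = N - nat k"
    have ab: "k = int (Suc a)" "N = a + b + 1" using 5 unfolding a_def b_def by auto
    have e1: "nat k = Suc a" "k - 1 = int a" "nat (int N + 1 - k) = Suc b" using ab by auto
    have b1: "qbinom q (Suc N) (int (Suc a)) = qpoch q q (Suc N) / (qpoch q q (Suc a) * qpoch q q (Suc b))"
      using ab by (subst qbinom_nat) auto
    have b2: "qbinom q N (int (Suc a)) = qpoch q q N / (qpoch q q (Suc a) * qpoch q q b)"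
      using ab by (subst qbinom_nat) auto
    have b3: "qbinom q N (int a) = qpoch q q N / (qpoch q q a * qpoch q q (Suc b))"
      using ab by (subst qbinom_nat) (auto simp: Suc_diff_le)
    have n1: "1 - q ^ Suc a \<noteq> 0" "1 - q ^ Suc b \<noteq> 0" using qn[of "Suc a"] qn[of "Suc b"] by auto
    have qN: "q ^ Suc N = q ^ Suc a * q ^ Suc b" using ab by (simp add: power_add[symmetric])
    show ?thesis
      unfolding e1 unfolding ab(1) b1 b2 b3 qf_Suc qN nat_int
      using alg_P[OF qf_nz[of a] qf_nz[of b] n1, of "qpoch q q N"]
      apply -
      apply (rule conjI)
       apply (drule conjunct1, simp del: power_Suc)
      apply (drule conjunct2, simp del: power_Suc)
      done
  qed (auto simp: qbinom_out)
qed

lemma qbinom_T3: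
  "qbinom q (Suc (Suc N)) (t+1) = (1 + q^(Suc N)) * qbinom q N t
     + q ^ nat (int N + 1 - t) * qbinom q N (t-1) + q ^ nat (t+1) * qbinom q N (t+1)"
proof (cases "-1 \<le> t \<and> t \<le> int N")
  case True
  have e1: "qbinom q (Suc (Suc N)) (t+1) = q ^ nat (t+1) * qbinom q (Suc N) (t+1) + qbinom q (Suc N) t"
    using qbinom_P[of "Suc N" "t+1", THEN conjunct1] by simp
  have e2: "qbinom q (Suc N) (t+1) = q ^ nat (t+1) * qbinom q N (t+1) + qbinom q N t"
    using qbinom_P[of "N" "t+1", THEN conjunct1] by simp
  have e3: "qbinom q (Suc N) t = qbinom q N t + q ^ nat (int N + 1 - t) * qbinom q N (t-1)"
    using qbinom_P[of "N" "t", THEN conjunct2] by simp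
  have e4: "(1 - q ^ nat (t+1)) * qbinom q N (t+1) = (1 - q ^ nat (int N - t)) * qbinom q N t"
    by (rule qbinom_M)
  have e5: "q ^ Suc N = q ^ nat (t+1) * q ^ nat (int N - t)"
  proof -
    have "Suc N = nat (t+1) + nat (int N - t)" using True by linarith
    then show ?thesis by (metis power_add)
  qed
  show ?thesis by (rule lin3[OF e1 e2 e3 e4 e5])
next
  case False
  then consider "t < -1" | "t = int N + 1" | "t > int N + 1" by linarith
  then show ?thesis
  proof cases
    case 2
    then show ?thesis using qbinom_SucN[of "Suc N"] by (simp add: qbinom_out add.commute)
  qed (auto simp: qbinom_out)
qed

lemma T1:
  assumes nn: "int n = int r + j"
  shows "q^r*(1+q^(r+1))*qbinom q (2*n+2) j - (1+q^(n+1))*(q^r*(1+q^(r+1)))*qbinom q (2*n) (j-1)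
     = q^(n+3*r+3)*(1+q^(n+1))*qbinom q (2*n) (j-2) + q^n*(1+q^(n+1))*qbinom q (2*n) j"
proof -
  have "j < 0 \<or> j = 0 \<or> j = int (nat (j-1)) + 1" by linarith
  then consider "j < 0" | "j = 0" | m where "j = int m + 1" by blast
  then show ?thesis
  proof cases
    case 1 then show ?thesis by (simp add: qbinom_out)
  next
    case 2 then have "n = r" using nn by simp
    then show ?thesis using 2 by (simp add: qbinom_out)
  next
    case 3
    have nn2: "n = r + m + 1" using nn 3 by simp
    have t3: "qbinom q (Suc (Suc (2*n))) (int m+1) = (1 + q^(Suc (2*n))) * qbinom q (2*n) (int m)
     + q ^ nat (int (2*n) + 1 - int m) * qbinom q (2*n) (int m-1) + q ^ nat (int m+1) * qbinom q (2*n) (int m+1)"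
      by (rule qbinom_T3)
    have m1: "(1 - q ^ nat (int m+1)) * qbinom q (2*n) (int m+1) = (1 - q ^ nat (int (2*n) - int m)) * qbinom q (2*n) (int m)"
      by (rule qbinom_M)
    have m2: "(1 - q ^ nat (int m - 1 + 1)) * qbinom q (2*n) (int m - 1 + 1) = (1 - q ^ nat (int (2*n) - (int m - 1))) * qbinom q (2*n) (int m - 1)"
      by (rule qbinom_M)
    have p1: "q ^ Suc (2*n) = q^3*(q^r)^2*(q^m)^2" unfolding nn2 by (simp add: power_add power_mult algebra_simps eval_nat_numeral)
    have p2: "q ^ nat (int (2*n) + 1 - int m) = q^3*(q^r)^2*(q^m)" 
    proof -
      have "nat (int (2*n) + 1 - int m) = 3 + 2*r + m" using nn2 by simp
      then show ?thesis by (simp add: power_add power_mult algebra_simps eval_nat_numeral)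
    qed
    have p3: "q ^ nat (int m+1) = q*q^m" by (simp add: nat_add_distrib)
    have p4: "q ^ nat (int (2*n) - int m) = q^2*(q^r)^2*(q^m)" 
    proof -
      have "nat (int (2*n) - int m) = 2 + 2*r + m" using nn2 by simp
      then show ?thesis by (simp add: power_add power_mult algebra_simps eval_nat_numeral)
    qed
    have p5: "q ^ nat (int (2*n) - (int m - 1)) = q^3*(q^r)^2*(q^m)" 
    proof -
      have "nat (int (2*n) - (int m - 1)) = 3 + 2*r + m" using nn2 by simp
      then show ?thesis by (simp add: power_add power_mult algebra_simps eval_nat_numeral)
    qed
    have p6: "q^(n+3*r+3) = q^4*(q^r)^4*q^m" unfolding nn2 by (simp add: power_add power_mult algebra_simps eval_nat_numeral)
    have p7: "q^(n+1) = q^2*q^r*q^m" unfolding nn2 by (simp add: power_add power_mult algebra_simps eval_nat_numeral)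
    have p8: "q^n = q*q^r*q^m" unfolding nn2 by (simp add: power_add power_mult algebra_simps eval_nat_numeral)
    have p9: "q^(r+1) = q*q^r" by simp
    have A1: "qbinom q (Suc (Suc (2*n))) (int m+1) = (1 + q^3*(q^r)^2*(q^m)^2) * qbinom q (2*n) (int m)
        + q^3*(q^r)^2*(q^m) * qbinom q (2*n) (int m-1) + q*q^m * qbinom q (2*n) (int m+1)"
      using t3 unfolding p1 p2 p3 .
    have A2: "(1 - q*q^m) * qbinom q (2*n) (int m+1) = (1 - q^2*(q^r)^2*(q^m)) * qbinom q (2*n) (int m)"
      using m1 unfolding p3 p4 .
    have A3: "(1 - q^m) * qbinom q (2*n) (int m) = (1 - q^3*(q^r)^2*(q^m)) * qbinom q (2*n) (int m - 1)"
      using m2 unfolding p5 by simp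
    have e: "2*n+2 = Suc (Suc (2*n))" "j - 1 = int m" "j - 2 = int m - 1" using 3 by auto
    show ?thesis using lin1[OF A1 A2 A3] unfolding e 3 p6 p7 p8 p9
      by (simp add: algebra_simps)
  qed
qed

definition "FF d n i = (-1)^i * q^(3*i^2+3*d*i+d+2*i) * (1+q^(d+2*i+1)) * qbinom q (2*n) (int n - int d - 2*int i - 1)"
definition "GG d n i = - ((-1)^i * q^(3*i^2+3*d*i+n) * (1+q^(n+1)) * qbinom q (2*n) (int n - int d - 2*int i))"

lemma FG: "FF d (Suc n) i - (1+q^(n+1)) * FF d n i = GG d n (Suc i) - GG d n i"
proof -
  define j where "j = int n - int d - 2*int i"
  define c :: 'a where "c = (-1)^i * q^(3*i^2+3*d*i)"
  have t: "q^(d+2*i)*(1+q^(d+2*i+1))*qbinom q (2*n+2) j - (1+q^(n+1))*(q^(d+2*i)*(1+q^(d+2*i+1)))*qbinom q (2*n) (j-1)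
     = q^(n+3*(d+2*i)+3)*(1+q^(n+1))*qbinom q (2*n) (j-2) + q^n*(1+q^(n+1))*qbinom q (2*n) j"
    by (rule T1) (simp add: j_def)
  note t2 = arg_cong[OF t, of "\<lambda>x. c * x"]
  have e1: "q^(3*i^2+3*d*i+d+2*i) = q^(3*i^2+3*d*i) * q^(d+2*i)" by (simp add: power_add[symmetric] add.assoc)
  have e2: "q^(3*(Suc i)^2+3*d*(Suc i)+n) = q^(3*i^2+3*d*i) * q^(n+3*(d+2*i)+3)"
    by (simp add: power_add[symmetric] power2_eq_square algebra_simps)
  have e3: "q^(3*i^2+3*d*i+n) = q^(3*i^2+3*d*i)*q^n" by (simp add: power_add)
  have i1: "int (Suc n) - int d - 2*int i - 1 = j" "2 * Suc n = 2*n+2" "int n - int d - 2*int (Suc i) = j - 2"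
    "int n - int d - 2*int i - 1 = j - 1" by (auto simp: j_def)
  show ?thesis unfolding FF_def GG_def e1 e2 e3 i1 using t2 unfolding c_def j_def[symmetric]
    by (simp add: algebra_simps)
qed

definition "L1 d n = (\<Sum>k<n. q ^ k * qbinom q (2*k) (int k + int d) * qpoch (- (q ^ (k+1))) q (n - 1 - k))"
definition "AA d n = (\<Sum>i<Suc n. FF d n i)"

lemma qpoch_neg_Suc: "k < n \<Longrightarrow> qpoch (- (q ^ (k+1))) q (Suc n - 1 - k) = qpoch (- (q ^ (k+1))) q (n - 1 - k) * (1 + q^n)"
proof -
  assume k: "k < n"
  have e: "Suc n - 1 - k = Suc (n - 1 - k)" using k by simp
  have "k+1+(n-1-k) = n" using k by simp
  then have e2: "q^(k+1) * q^(n-1-k) = q^n" by (metis power_add)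
  show ?thesis unfolding e qpoch_def using e2 by (simp add: algebra_simps)
qed

lemma L1_term: "k < n \<Longrightarrow> q ^ k * B * qpoch (- (q ^ (k+1))) q (Suc n - 1 - k) = (1+q^n) * (q ^ k * B * qpoch (- (q ^ (k+1))) q (n - 1 - k))"
  by (subst qpoch_neg_Suc) (simp_all add: algebra_simps)

lemma L1_rec: "L1 d (Suc n) = (1+q^n) * L1 d n + q^n * qbinom q (2*n) (int n + int d)"
proof -
  have "L1 d (Suc n) = (\<Sum>k<n. q ^ k * qbinom q (2*k) (int k + int d) * qpoch (- (q ^ (k+1))) q (Suc n - 1 - k))
      + q^n * qbinom q (2*n) (int n + int d)"
    unfolding L1_def by (simp add: qpoch_def)
  also have "(\<Sum>k<n. q ^ k * qbinom q (2*k) (int k + int d) * qpoch (- (q ^ (k+1))) q (Suc n - 1 - k))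
     = (1+q^n) * L1 d n"
    unfolding L1_def sum_distrib_left by (rule sum.cong[OF refl], rule L1_term) simp
  finally show ?thesis .
qed

lemma AA_rec: "AA d (Suc n) = (1+q^(n+1)) * (AA d n + q^n * qbinom q (2*n) (int n + int d))"
proof -
  have z: "FF d n (Suc n) = 0" unfolding FF_def by (simp add: qbinom_out)
  have "(1+q^(n+1)) * AA d n = (\<Sum>i<Suc (Suc n). (1+q^(n+1)) * FF d n i)"
    unfolding AA_def sum_distrib_left using z by simp
  then have "AA d (Suc n) - (1+q^(n+1)) * AA d n = (\<Sum>i<Suc (Suc n). FF d (Suc n) i - (1+q^(n+1)) * FF d n i)"
    unfolding AA_def by (simp add: sum_subtractf)
  also have "\<dots> = (\<Sum>i<Suc (Suc n). GG d n (Suc i) - GG d n i)" by (rule sum.cong[OF refl], rule FG)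
  also have "\<dots> = GG d n (Suc (Suc n)) - GG d n 0" by (rule sum_lessThan_telescope)
  also have "GG d n (Suc (Suc n)) = 0" unfolding GG_def by (simp add: qbinom_out)
  also have "GG d n 0 = - (q^n * (1+q^(n+1)) * qbinom q (2*n) (int n + int d))"
  proof -
    have "qbinom q (2*n) (int n - int d) = qbinom q (2*n) (int n + int d)"
      by (subst qbinom_sym) simp
    then show ?thesis unfolding GG_def by simp
  qed
  finally show ?thesis by (simp add: algebra_simps)
qed

lemma claim1: "(1+q^n) * L1 d n = AA d n"
proof (induction n)
  case 0
  then show ?case by (simp add: L1_def AA_def FF_def qbinom_out)
next
  case (Suc n)
  show ?case unfolding AA_rec L1_rec Suc[symmetric] by (simp add: algebra_simps)
qed

definition "hh n s = q^(bb s) * (1+q^s) * qbinom q (2*n) (int n + int s)"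
definition "PH n s = q^n * (q^(bb (s-1)) * (1+q^s) * qbinom q (2*n) (int n + int s - 1) - q^(bb s) * (q+q^s) * qbinom q (2*n) (int n + int s))"
definition "WW n p = q^(p^2)*(1+q^(n+1))*qbinom q (2*n) (int n + int p)"

lemma PW1: "hh (Suc n) (Suc p) - (1+q^n)*(1+q^(n+1)) * hh n (Suc p) = PH n (Suc p) - PH n (Suc (Suc p))"
proof (cases "p \<le> n")
  case True
  define r where "r = n - p"
  have nr: "n = p + r" using True r_def by simp
  define t where "t = int n + int p + 1"
  have t3: "qbinom q (Suc (Suc (2*n))) (t+1) = (1 + q^(Suc (2*n))) * qbinom q (2*n) t
     + q ^ nat (int (2*n) + 1 - t) * qbinom q (2*n) (t-1) + q ^ nat (t+1) * qbinom q (2*n) (t+1)"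
    by (rule qbinom_T3)
  have p1: "q^(Suc (2*n)) = q*(q^r)^2*(q^p)^2" unfolding nr by (simp add: power_add power_mult algebra_simps eval_nat_numeral)
  have p2: "q ^ nat (int (2*n) + 1 - t) = q^r" unfolding t_def using nr by (simp add: nat_diff_distrib)
  have p3: "q ^ nat (t+1) = q^2*q^r*(q^p)^2"
  proof -
    have "nat (t+1) = 2 + r + 2*p" unfolding t_def using nr by simp
    then show ?thesis by (simp add: power_add power_mult algebra_simps eval_nat_numeral)
  qed
  have T: "qbinom q (2 * Suc n) (int (Suc n) + int (Suc p)) = (1 + q*(q^r)^2*(q^p)^2) * qbinom q (2*n) t
     + q^r * qbinom q (2*n) (t-1) + q^2*q^r*(q^p)^2 * qbinom q (2*n) (t+1)"
  proof -
    have e: "2 * Suc n = Suc (Suc (2*n))" "int (Suc n) + int (Suc p) = t + 1" unfolding t_def by simp_all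
    show ?thesis unfolding e using t3 unfolding p1 p2 p3 .
  qed
  note L = lin_h[OF T, of "q^bb p"]
  have i: "int n + int (Suc p) - 1 = t - 1" "int n + int (Suc p) = t" "int n + int (Suc (Suc p)) - 1 = t"
     "int n + int (Suc (Suc p)) = t + 1" unfolding t_def by simp_all
  have q1: "q^(bb (Suc p)) = q^bb p * q^p" by (simp add: power_add)
  have q2: "q^(bb (Suc (Suc p))) = q^bb p * (q^p)^2 * q" by (simp add: power_add power2_eq_square algebra_simps)
  have q3: "q^n = q^r * q^p" unfolding nr by (simp add: power_add)
  have q4: "q^(n+1) = q * q^r * q^p" unfolding nr by (simp add: power_add)
  have q5: "q^(Suc (Suc p)) = q^2 * q^p" by (simp add: eval_nat_numeral)
  show ?thesis unfolding hh_def PH_def i q1 q2 q3 q4 q5 diff_Suc_1 using L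
    by (simp add: algebra_simps)
next
  case False
  then show ?thesis unfolding hh_def PH_def by (simp add: qbinom_out)
qed

lemma PW2: "q^(bb (Suc p)) * PH n (Suc p) = q^n * (WW n p - WW n (Suc p))"
proof (cases "p \<le> n")
  case True
  define r where "r = n - p"
  have nr: "n = p + r" using True r_def by simp
  have m: "(1 - q ^ nat (int n + int p + 1)) * qbinom q (2*n) (int n + int p + 1)
      = (1 - q ^ nat (int (2*n) - (int n + int p))) * qbinom q (2*n) (int n + int p)"
    by (rule qbinom_M)
  have p1: "q ^ nat (int n + int p + 1) = q*(q^p)^2*q^r"
  proof -
    have "nat (int n + int p + 1) = 1 + 2*p + r" using nr by simp
    then show ?thesis by (simp add: power_add power_mult algebra_simps eval_nat_numeral)
  qed
  have p2: "q ^ nat (int (2*n) - (int n + int p)) = q^r" using nr by (simp add: nat_diff_distrib)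
  have M: "(1 - q*(q^p)^2*q^r) * qbinom q (2*n) (int n + int p + 1) = (1 - q^r) * qbinom q (2*n) (int n + int p)"
    using m unfolding p1 p2 .
  note L = lin_w[OF M, of "q^(p^2)"]
  have q0: "q^(bb (Suc p)) * q^(bb p) = q^(p^2)"
  proof -
    have "bb (Suc p) + bb p = p^2" using bb_sq[of p] by linarith
    then show ?thesis by (metis power_add)
  qed
  have q1: "q^(bb (Suc p)) * q^(bb (Suc p)) = q^(p^2) * q^p" 
  proof -
    have "bb (Suc p) + bb (Suc p) = p^2 + p" using bb_sq[of p] by simp
    then show ?thesis by (metis power_add)
  qed
  have q2: "q^((Suc p)^2) = q^(p^2) * (q^p)^2 * q" by (simp add: power2_eq_square power_add algebra_simps)
  have q3: "q^(n+1) = q * q^p * q^r" unfolding nr by (simp add: power_add)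
  have i: "int n + int (Suc p) - 1 = int n + int p" "int n + int (Suc p) = int n + int p + 1" by simp_all
  have "q^(bb (Suc p)) * PH n (Suc p) = q^n * (q^(bb (Suc p)) * q^(bb p) * (1+q*q^p) * qbinom q (2*n) (int n + int p)
      - q^(bb (Suc p)) * q^(bb (Suc p)) * (q+q*q^p) * qbinom q (2*n) (int n + int p + 1))"
    unfolding PH_def i diff_Suc_1 by (simp add: algebra_simps)
  also have "\<dots> = q^n * (WW n p - WW n (Suc p))"
    unfolding q0 q1 WW_def q2 q3 i using arg_cong[OF L, of "\<lambda>x. q^n * x"] by (simp add: algebra_simps)
  finally show ?thesis .
next
  case False
  then show ?thesis unfolding WW_def PH_def by (simp add: qbinom_out)
qed

lemma telescope_down:
  fixes f :: "nat \<Rightarrow> 'b::ab_group_add"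
  assumes "m \<le> Suc n"
  shows "(\<Sum>i = m..n. f i - f (Suc i)) = f m - f (Suc n)"
proof -
  have "(\<Sum>i = m..n. f i - f (Suc i)) = - (\<Sum>i = m..n. f (Suc i) - f i)"
    by (simp add: sum_negf[symmetric])
  also have "\<dots> = f m - f (Suc n)" using sum_Suc_diff[OF assms, of f] by simp
  finally show ?thesis .
qed

lemma Klem:
  assumes "1 \<le> k" "k \<le> Suc n"
  shows "(\<Sum>s=k..Suc n. hh (Suc n) s) = (1+q^n)*(1+q^(n+1)) * (\<Sum>s=k..n. hh n s) + PH n k"
proof -
  have z: "hh n (Suc n) = 0" unfolding hh_def by (simp add: qbinom_out)
  have z2: "PH n (Suc (Suc n)) = 0" unfolding PH_def by (simp add: qbinom_out)
  have s1: "(\<Sum>s=k..Suc n. hh n s) = (\<Sum>s=k..n. hh n s)" using z assms by simp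
  have "(\<Sum>s=k..Suc n. hh (Suc n) s) - (1+q^n)*(1+q^(n+1)) * (\<Sum>s=k..Suc n. hh n s)
      = (\<Sum>s=k..Suc n. hh (Suc n) s - (1+q^n)*(1+q^(n+1)) * hh n s)"
    by (simp only: sum_subtractf sum_distrib_left)
  also have "\<dots> = (\<Sum>s=k..Suc n. PH n s - PH n (Suc s))"
  proof (rule sum.cong[OF refl])
    fix s assume "s \<in> {k..Suc n}"
    then have "s = Suc (s - 1)" using assms by auto
    then show "hh (Suc n) s - (1+q^n)*(1+q^(n+1)) * hh n s = PH n s - PH n (Suc s)"
      using PW1[of n "s - 1"] by metis
  qed
  also have "\<dots> = PH n k - PH n (Suc (Suc n))" by (rule telescope_down) (use assms in simp)
  finally show ?thesis unfolding s1 z2 by (simp add: algebra_simps)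
qed

definition "CC d n = (\<Sum>k=d+1..n+1. q^(bb k) * (\<Sum>s=k..n. hh n s))"

lemma SumPH: "d \<le> n \<Longrightarrow> (\<Sum>k=d+1..n+1. q^(bb k) * PH n k) = q^n * WW n d"
proof -
  assume dn: "d \<le> n"
  have "(\<Sum>k=d+1..n+1. q^(bb k) * PH n k) = (\<Sum>p=d..n. q^(bb (Suc p)) * PH n (Suc p))"
    using sum.shift_bounds_cl_Suc_ivl[of "\<lambda>k. q^(bb k) * PH n k" d n] by simp
  also have "\<dots> = (\<Sum>p=d..n. q^n * (WW n p - WW n (Suc p)))" by (rule sum.cong[OF refl], rule PW2)
  also have "\<dots> = q^n * (WW n d - WW n (Suc n))"
    unfolding sum_distrib_left[symmetric] using dn by (subst telescope_down) simp_all
  also have "WW n (Suc n) = 0" unfolding WW_def by (simp add: qbinom_out)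
  finally show ?thesis by simp
qed

lemma CC_rec: "d \<le> n \<Longrightarrow> CC d (Suc n) = (1+q^n)*(1+q^(n+1)) * CC d n + q^n * WW n d"
proof -
  assume dn: "d \<le> n"
  have "CC d (Suc n) = (\<Sum>k=d+1..n+1. q^(bb k) * (\<Sum>s=k..Suc n. hh (Suc n) s))"
    unfolding CC_def using dn by simp
  also have "\<dots> = (\<Sum>k=d+1..n+1. (1+q^n)*(1+q^(n+1)) * (q^(bb k) * (\<Sum>s=k..n. hh n s)) + q^(bb k) * PH n k)"
  proof (rule sum.cong[OF refl])
    fix k assume k: "k \<in> {d+1..n+1}"
    show "q^(bb k) * (\<Sum>s=k..Suc n. hh (Suc n) s) = (1+q^n)*(1+q^(n+1)) * (q^(bb k) * (\<Sum>s=k..n. hh n s)) + q^(bb k) * PH n k"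
    proof -
      have K: "(\<Sum>s=k..Suc n. hh (Suc n) s) = (1+q^n)*(1+q^(n+1)) * (\<Sum>s=k..n. hh n s) + PH n k"
        using k by (intro Klem) auto
      show ?thesis unfolding K by (simp add: algebra_simps)
    qed
  qed
  also have "\<dots> = (1+q^n)*(1+q^(n+1)) * CC d n + q^n * WW n d"
    unfolding sum.distrib SumPH[OF dn] CC_def sum_distrib_left[symmetric] ..
  finally show ?thesis .
qed

definition "L2 d n = (\<Sum>k<n. q ^ k * qbinom q (2*k) (int k + int d) * (qpoch (- (q ^ (k+1))) q (n - 1 - k))^2)"

lemma L2_term: "k < n \<Longrightarrow> q ^ k * B * (qpoch (- (q ^ (k+1))) q (Suc n - 1 - k))^2 = (1+q^n)^2 * (q ^ k * B * (qpoch (- (q ^ (k+1))) q (n - 1 - k))^2)"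
  by (subst qpoch_neg_Suc) (simp_all add: algebra_simps power2_eq_square)

lemma L2_rec: "L2 d (Suc n) = (1+q^n)^2 * L2 d n + q^n * qbinom q (2*n) (int n + int d)"
proof -
  have "L2 d (Suc n) = (\<Sum>k<n. q ^ k * qbinom q (2*k) (int k + int d) * (qpoch (- (q ^ (k+1))) q (Suc n - 1 - k))^2)
      + q^n * qbinom q (2*n) (int n + int d)"
    unfolding L2_def by (simp add: qpoch_def)
  also have "(\<Sum>k<n. q ^ k * qbinom q (2*k) (int k + int d) * (qpoch (- (q ^ (k+1))) q (Suc n - 1 - k))^2)
     = (1+q^n)^2 * L2 d n"
    unfolding L2_def sum_distrib_left by (rule sum.cong[OF refl], rule L2_term) simp
  finally show ?thesis .
qed

lemma claim2: "d \<le> n \<Longrightarrow> q^(d^2) * (1+q^n) * L2 d n = CC d n"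
proof (induction n rule: dec_induct)
  case base
  have "L2 d d = 0" unfolding L2_def by (rule sum.neutral) (auto simp: qbinom_out)
  moreover have "CC d d = 0" unfolding CC_def by simp
  ultimately show ?case by simp
next
  case (step n)
  show ?case unfolding CC_rec[OF step(1)] L2_rec step(3)[symmetric] WW_def
    by (simp add: algebra_simps power2_eq_square)
qed

end


lemma qvar_pow: "qvar ^ k = Fract (monom 1 k) 1"
proof (induction k)
  case 0 then show ?case by (simp add: One_fract_def monom_0 one_pCons)
next
  case (Suc k)
  have "[:0, 1:] * monom (1::rat) k = monom 1 (Suc k)"
    by (simp add: monom_Suc)
  then show ?case using Suc by (simp add: qvar_def)
qed

lemma qvar_qn: "0 < k \<Longrightarrow> qvar ^ k \<noteq> 1"
proof
  assume k: "0 < k" and e: "qvar ^ k = 1"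
  then have "Fract (monom (1::rat) k) 1 = Fract 1 1" by (simp add: qvar_pow One_fract_def)
  then have "monom (1::rat) k = 1" by (simp add: eq_fract)
  then have "degree (monom (1::rat) k) = 0" by simp
  then show False using k by (simp add: degree_monom_eq)
qed

lemma qvar_plus: "1 + qvar ^ n \<noteq> 0"
proof
  assume e: "1 + qvar ^ n = 0"
  then have "Fract (1 + monom (1::rat) n) 1 = Fract 0 1"
    by (simp add: qvar_pow One_fract_def Zero_fract_def)
  then have "1 + monom (1::rat) n = 0" by (simp add: eq_fract)
  then have "coeff (1 + monom (1::rat) n) 0 = 0" by simp
  moreover have "coeff (1 + monom (1::rat) n) 0 = 1 + (if n = 0 then 1 else 0)"
    by (simp only: coeff_add coeff_1 coeff_monom) simp
  ultimately show False by (cases "n = 0") auto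
qed

lemma qvar_nz: "qvar \<noteq> 0"
  by (simp add: qvar_def Zero_fract_def eq_fract)

lemma aux1:
  fixes a m B B' s P X Y :: "'a::field"
  assumes "m \<noteq> 0" "Y \<noteq> 0" "a*B = m*B'"
  shows "s * P * (a*X/(m*Y)) * B = s*P*X*B'/Y"
proof -
  have "B' = a*B/m" using assms by (simp add: field_simps)
  then show ?thesis using assms(1,2) by (simp add: field_simps)
qed

lemma term1:
  fixes q :: "'a::field"
  assumes qn: "\<And>k. 0 < k \<Longrightarrow> q ^ k \<noteq> 1" and hn: "1 + q^n \<noteq> 0" and i: "2*i \<le> n - d" and dn: "d \<le> n"
  shows "(-1) ^ ((n - d - (n-d-2*i)) div 2)
            * q powi ((3 * (int n ^ 2 + int (n-d-2*i) ^ 2 - int d ^ 2) - 6 * int n * int (n-d-2*i)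
                        + 4 * int n - 4 * int (n-d-2*i)) div 4)
            * ((1 - q ^ (n-d-2*i)) * (1 + q ^ (n - (n-d-2*i) + 1)) / ((1 - q ^ (2*n - (n-d-2*i) + 1)) * (1 + q ^ n)))
            * qbinom q (2*n) (int (n-d-2*i)) = FF q d n i / (1 + q^n)"
proof -
  define k where "k = n-d-2*i"
  have nk: "int n = int k + int d + 2 * int i" using i dn unfolding k_def by linarith
  have e1: "(n - d - k) div 2 = i" using i unfolding k_def by simp
  have "3 * (int n ^ 2 + int k ^ 2 - int d ^ 2) - 6 * int n * int k + 4 * int n - 4 * int k
      = 4 * int (3*i^2+3*d*i+d+2*i)" unfolding nk by (simp add: power2_eq_square algebra_simps)
  then have e2: "(3 * (int n ^ 2 + int k ^ 2 - int d ^ 2) - 6 * int n * int k + 4 * int n - 4 * int k) div 4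
      = int (3*i^2+3*d*i+d+2*i)" by simp
  have e3: "n - k + 1 = d+2*i+1" using i dn unfolding k_def by simp
  have e4: "int n - int d - 2*int i - 1 = int k - 1" using nk by simp
  have key: "(1 - q^k) * qbinom q (2*n) (int k) = (1 - q^(2*n-k+1)) * qbinom q (2*n) (int k - 1)"
  proof -
    have m: "(1 - q ^ nat (int k - 1 + 1)) * qbinom q (2*n) (int k - 1 + 1)
        = (1 - q ^ nat (int (2*n) - (int k - 1))) * qbinom q (2*n) (int k - 1)"
      by (rule qbinom_M[OF qn])
    have "nat (int (2*n) - (int k - 1)) = 2*n-k+1" using nk by simp
    then show ?thesis using m by simp
  qed
  have nz: "1 - q^(2*n-k+1) \<noteq> 0" using qn[of "2*n-k+1"] by auto
  show ?thesis unfolding k_def[symmetric] e1 e2 e3 power_int_of_nat FF_def e4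
    using aux1[OF nz hn key] by (simp add: FF_def[OF qn] e4)
qed

lemma h1: "(x::nat) \<le> a div 2 \<Longrightarrow> 2*x \<le> a" by linarith
lemma h2: "(k::nat) \<le> a \<Longrightarrow> k mod 2 = a mod 2 \<Longrightarrow> a - k = 2 * ((a - k) div 2)" by presburger
lemma h3: "(x::nat) > a div 2 \<Longrightarrow> 2*x > a" by linarith

lemma part1:
  fixes q :: "'a::field"
  assumes qn: "\<And>k. 0 < k \<Longrightarrow> q ^ k \<noteq> 1" and hn: "1 + q^n \<noteq> 0" and dn: "d \<le> n"
  shows "(\<Sum>k<n. q ^ k * qbinom q (2*k) (int k + int d) * qpoch (- (q ^ (k+1))) q (n - 1 - k))
       = (\<Sum>k\<in>{k. k \<le> n - d \<and> k mod 2 = (n - d) mod 2}.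
            (-1) ^ ((n - d - k) div 2)
            * q powi ((3 * (int n ^ 2 + int k ^ 2 - int d ^ 2) - 6 * int n * int k
                        + 4 * int n - 4 * int k) div 4)
            * ((1 - q ^ k) * (1 + q ^ (n - k + 1)) / ((1 - q ^ (2*n - k + 1)) * (1 + q ^ n)))
            * qbinom q (2*n) (int k))"
proof -
  define M where "M = (n - d) div 2"
  have L: "(\<Sum>k<n. q ^ k * qbinom q (2*k) (int k + int d) * qpoch (- (q ^ (k+1))) q (n - 1 - k)) = AA q d n / (1+q^n)"
  proof -
    have l1: "(\<Sum>k<n. q ^ k * qbinom q (2*k) (int k + int d) * qpoch (- (q ^ (k+1))) q (n - 1 - k)) = L1 q d n"
      by (simp only: L1_def[OF qn])
    have "L1 q d n = AA q d n / (1+q^n)" using claim1[OF qn, of n d] hn by (simp add: field_simps)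
    then show ?thesis unfolding l1 .
  qed
  have A0: "AA q d n = (\<Sum>i<Suc n. FF q d n i)" by (rule AA_def[OF qn])
  have A1: "AA q d n = (\<Sum>i\<in>{..M}. FF q d n i)"
    unfolding A0
  proof (rule sum.mono_neutral_right)
    show "{..M} \<subseteq> {..<Suc n}" unfolding M_def by auto
    show "\<forall>i\<in>{..<Suc n} - {..M}. FF q d n i = 0"
    proof
      fix i assume "i \<in> {..<Suc n} - {..M}"
      then have "i > M" by auto
      then have "2*i > n - d" unfolding M_def by (rule h3)
      then have "int n - int d - 2 * int i - 1 < 0" by linarith
      then show "FF q d n i = 0" by (simp add: FF_def[OF qn] qbinom_out)
    qed
  qed simp
  have S: "{k. k \<le> n - d \<and> k mod 2 = (n - d) mod 2} = (\<lambda>i. n-d-2*i) ` {..M}"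
  proof (intro set_eqI iffI)
    fix k assume "k \<in> {k. k \<le> n - d \<and> k mod 2 = (n - d) mod 2}"
    then have k: "k \<le> n - d" "k mod 2 = (n - d) mod 2" by auto
    define j where "j = (n-d-k) div 2"
    have "n-d-k = 2*j" unfolding j_def using h2[OF k] .
    then have "k = n - d - 2 * j" "j \<le> M" using k(1) unfolding M_def by auto
    then show "k \<in> (\<lambda>i. n-d-2*i) ` {..M}" by blast
  next
    fix k assume "k \<in> (\<lambda>i. n-d-2*i) ` {..M}"
    then obtain i where "i \<le> M" "k = n-d-2*i" by auto
    then have "2*i \<le> n-d" unfolding M_def using h1 by blast
    then have "k + 2*i = n-d" using \<open>k = n-d-2*i\<close> by simp
    then have "k mod 2 = (n - d) mod 2" by (metis mod_mult_self1 mult.commute)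
    then show "k \<in> {k. k \<le> n - d \<and> k mod 2 = (n - d) mod 2}" using \<open>k = n-d-2*i\<close> by auto
  qed
  have inj: "inj_on (\<lambda>i. n-d-2*i) {..M}"
  proof (rule inj_onI)
    fix x y assume "x \<in> {..M}" "y \<in> {..M}" "n-d-2*x = n-d-2*y"
    then have "2*x \<le> n-d" "2*y \<le> n-d" "n-d-2*x = n-d-2*y" unfolding M_def using h1 by auto
    then show "x = y" by linarith
  qed
  show ?thesis unfolding L S sum.reindex[OF inj] A1 sum_divide_distrib o_def
    apply (rule sum.cong[OF refl])
    apply (rule term1[OF qn hn _ dn, symmetric])
    using h1 unfolding M_def by auto
qed


lemma bb2int: "2 * int (bb p) = int p * (int p - 1)"
  by (induction p) (simp_all add: algebra_simps)

lemma term2: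
  fixes q :: "'a::field"
  assumes qn: "\<And>k. 0 < k \<Longrightarrow> q ^ k \<noteq> 1" and hn: "1 + q^n \<noteq> 0" and qz: "q \<noteq> 0"
  shows "q powi ((int (Suc s) ^ 2 - 3 * int (Suc s) + int k ^ 2 - int k) div 2 - int d ^ 2 + 1)
            * ((1 + q ^ (Suc s - 1)) / (1 + q ^ n))
            * qbinom q (2*n) (int n - int (Suc s) + 1)
       = q^(bb k) * hh q n s / (q^(d^2) * (1+q^n))"
proof -
  have "int (Suc s) ^ 2 - 3 * int (Suc s) + int k ^ 2 - int k = 2 * (int (bb s) + int (bb k)) - 2"
    using bb2int[of s] bb2int[of k] by (simp add: power2_eq_square algebra_simps)
  then have e: "(int (Suc s) ^ 2 - 3 * int (Suc s) + int k ^ 2 - int k) div 2 - int d ^ 2 + 1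
      = int (bb s + bb k) - int (d^2)" by simp
  have p: "q powi (int (bb s + bb k) - int (d^2)) = q^(bb s + bb k) / q^(d^2)"
  proof -
    have "q powi (int (bb s + bb k) - int (d^2)) = q powi int (bb s + bb k) / q powi int (d^2)"
      by (rule power_int_diff) (simp add: qz)
    then show ?thesis by (simp only: power_int_of_nat)
  qed
  have b: "qbinom q (2*n) (int n - int (Suc s) + 1) = qbinom q (2*n) (int n + int s)"
    by (subst qbinom_sym) simp
  have qd: "q^(d^2) \<noteq> 0" using qz by simp
  show ?thesis unfolding e p b using hn qd by (simp add: hh_def[OF qn] power_add field_simps)
qed

lemma part2:
  fixes q :: "'a::field"
  assumes qn: "\<And>k. 0 < k \<Longrightarrow> q ^ k \<noteq> 1" and hn: "1 + q^n \<noteq> 0" and qz: "q \<noteq> 0" and dn: "d \<le> n"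
  shows "(\<Sum>k<n. q ^ k * qbinom q (2*k) (int k + int d) * (qpoch (- (q ^ (k+1))) q (n - 1 - k))^2)
       = (\<Sum>k=d+1..n. \<Sum>j=k+1..n+1.
            q powi ((int j ^ 2 - 3 * int j + int k ^ 2 - int k) div 2 - int d ^ 2 + 1)
            * ((1 + q ^ (j - 1)) / (1 + q ^ n))
            * qbinom q (2*n) (int n - int j + 1))"
proof -
  have qd: "q^(d^2) \<noteq> 0" using qz by simp
  have l2: "(\<Sum>k<n. q ^ k * qbinom q (2*k) (int k + int d) * (qpoch (- (q ^ (k+1))) q (n - 1 - k))^2) = L2 q d n"
    by (simp only: L2_def[OF qn])
  have L: "L2 q d n = CC q d n / (q^(d^2) * (1+q^n))"
  proof -
    have D: "q^(d^2) * (1+q^n) \<noteq> 0" using hn qd by simp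
    show ?thesis using claim2[OF qn dn] D by (metis nonzero_mult_div_cancel_left)
  qed
  have C0: "CC q d n = (\<Sum>k=d+1..n+1. q^(bb k) * (\<Sum>s=k..n. hh q n s))" by (rule CC_def[OF qn])
  have C1: "CC q d n = (\<Sum>k=d+1..n. q^(bb k) * (\<Sum>s=k..n. hh q n s))"
    unfolding C0 using dn by simp
  have R: "(\<Sum>k=d+1..n. \<Sum>j=k+1..n+1.
            q powi ((int j ^ 2 - 3 * int j + int k ^ 2 - int k) div 2 - int d ^ 2 + 1)
            * ((1 + q ^ (j - 1)) / (1 + q ^ n))
            * qbinom q (2*n) (int n - int j + 1))
      = (\<Sum>k=d+1..n. \<Sum>s=k..n. q^(bb k) * hh q n s / (q^(d^2) * (1+q^n)))"
  proof (rule sum.cong[OF refl])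
    fix k
    show "(\<Sum>j=k+1..n+1.
            q powi ((int j ^ 2 - 3 * int j + int k ^ 2 - int k) div 2 - int d ^ 2 + 1)
            * ((1 + q ^ (j - 1)) / (1 + q ^ n))
            * qbinom q (2*n) (int n - int j + 1))
       = (\<Sum>s=k..n. q^(bb k) * hh q n s / (q^(d^2) * (1+q^n)))"
      unfolding Suc_eq_plus1[symmetric] sum.shift_bounds_cl_Suc_ivl
      by (rule sum.cong[OF refl], rule term2[OF qn hn qz])
  qed
  show ?thesis unfolding l2 L R C1 sum_divide_distrib sum_distrib_left by (simp add: mult.assoc)
qed


theorem theorem1p1:
  fixes n d :: nat
  assumes "n \<ge> 1" and "d \<le> n - 1"
  defines "q \<equiv> qvar"
  shows "((\<Sum>k<n. q ^ k * qbinom q (2*k) (int k + int d) * qpoch (- (q ^ (k+1))) q (n - 1 - k))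
       = (\<Sum>k\<in>{k. k \<le> n - d \<and> k mod 2 = (n - d) mod 2}.
            (-1) ^ ((n - d - k) div 2)
            * q powi ((3 * (int n ^ 2 + int k ^ 2 - int d ^ 2) - 6 * int n * int k
                        + 4 * int n - 4 * int k) div 4)
            * ((1 - q ^ k) * (1 + q ^ (n - k + 1)) / ((1 - q ^ (2*n - k + 1)) * (1 + q ^ n)))
            * qbinom q (2*n) (int k)))
    \<and> ((\<Sum>k<n. q ^ k * qbinom q (2*k) (int k + int d) * (qpoch (- (q ^ (k+1))) q (n - 1 - k))^2)
       = (\<Sum>k=d+1..n. \<Sum>j=k+1..n+1.
            q powi ((int j ^ 2 - 3 * int j + int k ^ 2 - int k) div 2 - int d ^ 2 + 1)
            * ((1 + q ^ (j - 1)) / (1 + q ^ n))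
            * qbinom q (2*n) (int n - int j + 1)))"
proof -
  have qn: "\<And>k. 0 < k \<Longrightarrow> q ^ k \<noteq> 1" unfolding q_def by (rule qvar_qn)
  have hn: "1 + q^n \<noteq> 0" unfolding q_def by (rule qvar_plus)
  have qz: "q \<noteq> 0" unfolding q_def by (rule qvar_nz)
  have dn: "d \<le> n" using assms(2) by simp
  show ?thesis using part1[OF qn hn dn] part2[OF qn hn qz dn] by blast
qed

end
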